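(* Let $w\in W$ and $\gamma\in\mathrm{maxinv}(w)$. Then $w\to s_\gamma w$ is a quantum edge of $\mathrm{QB}(W)$; that is, writing $s_\gamma w=ws_{\beta}$ with $\beta=-w^{-1}\gamma\in\Phi^+$, we have $\ell(ws_\beta)=\ell(w)+1-\langle\beta^\vee,2\rho\rangle$.
   Context: $\Phi$ is a reduced crystallographic finite root system with fixed basis $\Delta$, positive roots $\Phi^+$, negative roots $\Phi^-=-\Phi^+$, Weyl group $W$ with Coxeter length $\ell$, and $2\rho=\sum_{\beta\in\Phi^+}\beta$. For roots $\gamma,\alpha$ write $\gamma\le\alpha$ if $\alpha-\gamma$ is a $\mathbb Z_{\ge0}$-combination of positive roots. For $w\in W$: $\mathrm{inv}(w)=\{\alpha\in\Phi^+:w^{-1}\alpha\in\Phi^-\}$, and $\gamma\in\mathrm{inv}(w)$ is a maximal inversion, $\gamma\in\mathrm{maxinv}(w)$, if there is no $\alpha\in\mathrm{inv}(w)$ with $\alpha\ne\gamma$ and $\gamma\le\alpha$. The quantum Bruhat graph $\mathrm{QB}(W)$ has vertex set $W$ and an edge $u\to us_\beta$ ($\beta\in\Phi^+$) if $\ell(us_\beta)=\ell(u)+1$ (Bruhat edge) or $\ell(us_\beta)=\ell(u)+1-\langle\beta^\vee,2\rho\rangle$ (quantum edge). *)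

theory Defs
  imports "HOL-Analysis.Analysis"
begin

definition refl :: "'a::real_inner \<Rightarrow> 'a \<Rightarrow> 'a" where
  "refl \<alpha> x = x - ((2 * (x \<bullet> \<alpha>)) / (\<alpha> \<bullet> \<alpha>)) *\<^sub>R \<alpha>"

definition coroot :: "'a::real_inner \<Rightarrow> 'a" where
  "coroot \<alpha> = (2 / (\<alpha> \<bullet> \<alpha>)) *\<^sub>R \<alpha>"

definition root_system :: "'a::euclidean_space set \<Rightarrow> bool" where
  "root_system \<Phi> \<longleftrightarrow>
     finite \<Phi> \<and> 0 \<notin> \<Phi> \<and>
     (\<forall>\<alpha>\<in>\<Phi>. \<forall>\<beta>\<in>\<Phi>. refl \<alpha> \<beta> \<in> \<Phi>) \<and>
     (\<forall>\<alpha>\<in>\<Phi>. \<forall>\<beta>\<in>\<Phi>. 2 * (\<beta> \<bullet> \<alpha>) / (\<alpha> \<bullet> \<alpha>) \<in> \<int>) \<and>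
     (\<forall>\<alpha>\<in>\<Phi>. \<forall>c::real. c *\<^sub>R \<alpha> \<in> \<Phi> \<longrightarrow> c = 1 \<or> c = -1)"

definition root_basis :: "'a::euclidean_space set \<Rightarrow> 'a set \<Rightarrow> bool" where
  "root_basis \<Phi> \<Delta> \<longleftrightarrow>
     \<Delta> \<subseteq> \<Phi> \<and> independent \<Delta> \<and>
     (\<forall>\<beta>\<in>\<Phi>. \<exists>c::'a \<Rightarrow> int. \<beta> = (\<Sum>\<alpha>\<in>\<Delta>. of_int (c \<alpha>) *\<^sub>R \<alpha>) \<and>
                 ((\<forall>\<alpha>\<in>\<Delta>. c \<alpha> \<ge> 0) \<or> (\<forall>\<alpha>\<in>\<Delta>. c \<alpha> \<le> 0)))"

definition pos_roots :: "'a::euclidean_space set \<Rightarrow> 'a set \<Rightarrow> 'a set" where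
  "pos_roots \<Phi> \<Delta> = {\<beta>\<in>\<Phi>. \<exists>c::'a \<Rightarrow> int. \<beta> = (\<Sum>\<alpha>\<in>\<Delta>. of_int (c \<alpha>) *\<^sub>R \<alpha>) \<and> (\<forall>\<alpha>\<in>\<Delta>. c \<alpha> \<ge> 0)}"

definition neg_roots :: "'a::euclidean_space set \<Rightarrow> 'a set \<Rightarrow> 'a set" where
  "neg_roots \<Phi> \<Delta> = uminus ` pos_roots \<Phi> \<Delta>"

definition two_rho :: "'a::euclidean_space set \<Rightarrow> 'a set \<Rightarrow> 'a" where
  "two_rho \<Phi> \<Delta> = (\<Sum>\<beta>\<in>pos_roots \<Phi> \<Delta>. \<beta>)"

definition refl_word :: "'a::real_inner list \<Rightarrow> 'a \<Rightarrow> 'a" where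
  "refl_word xs = foldr (\<circ>) (map refl xs) id"

definition weyl_group :: "'a::euclidean_space set \<Rightarrow> ('a \<Rightarrow> 'a) set" where
  "weyl_group \<Phi> = {refl_word xs | xs. set xs \<subseteq> \<Phi>}"

definition wlength :: "'a::euclidean_space set \<Rightarrow> ('a \<Rightarrow> 'a) \<Rightarrow> nat" where
  "wlength \<Delta> w = (LEAST n. \<exists>xs. length xs = n \<and> set xs \<subseteq> \<Delta> \<and> w = refl_word xs)"

definition root_le :: "'a::euclidean_space set \<Rightarrow> 'a set \<Rightarrow> 'a \<Rightarrow> 'a \<Rightarrow> bool" where
  "root_le \<Phi> \<Delta> \<gamma> \<alpha> \<longleftrightarrow>
     (\<exists>c::'a \<Rightarrow> nat. \<alpha> - \<gamma> = (\<Sum>\<beta>\<in>pos_roots \<Phi> \<Delta>. of_nat (c \<beta>) *\<^sub>R \<beta>))"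

definition inversions :: "'a::euclidean_space set \<Rightarrow> 'a set \<Rightarrow> ('a \<Rightarrow> 'a) \<Rightarrow> 'a set" where
  "inversions \<Phi> \<Delta> w = {\<alpha>\<in>pos_roots \<Phi> \<Delta>. inv w \<alpha> \<in> neg_roots \<Phi> \<Delta>}"

definition maxinv :: "'a::euclidean_space set \<Rightarrow> 'a set \<Rightarrow> ('a \<Rightarrow> 'a) \<Rightarrow> 'a set" where
  "maxinv \<Phi> \<Delta> w = {\<gamma>\<in>inversions \<Phi> \<Delta> w.
      \<not> (\<exists>\<alpha>\<in>inversions \<Phi> \<Delta> w. \<alpha> \<noteq> \<gamma> \<and> root_le \<Phi> \<Delta> \<gamma> \<alpha>)}"

definition quantum_edge :: "'a::euclidean_space set \<Rightarrow> 'a set \<Rightarrow> ('a \<Rightarrow> 'a) \<Rightarrow> 'a \<Rightarrow> bool" where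
  "quantum_edge \<Phi> \<Delta> u \<beta> \<longleftrightarrow> \<beta> \<in> pos_roots \<Phi> \<Delta> \<and>
     real (wlength \<Delta> (u \<circ> refl \<beta>)) = real (wlength \<Delta> u) + 1 - coroot \<beta> \<bullet> two_rho \<Phi> \<Delta>"

end

theory Submission
  imports Defs
begin


definition orth :: "('a::real_inner \<Rightarrow> 'a) \<Rightarrow> bool" where
  "orth u \<longleftrightarrow> linear u \<and> (\<forall>x y. u x \<bullet> u y = x \<bullet> y)"

lemma refl_linear: "linear (refl a)"
  unfolding refl_def by (intro linear_compose_sub linear_ident) (auto intro!: linear_scaleR_left bounded_linear.linear bounded_linear_inner_left simp: linear_iff inner_add_left algebra_simps add_divide_distrib)

lemma refl_zero[simp]: "refl 0 = id"
  by (auto simp: refl_def)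

lemma refl_inner: "refl a x \<bullet> refl a y = x \<bullet> y"
proof (cases "a = 0")
  case True then show ?thesis by simp
next
  case False
  then have aa: "a \<bullet> a \<noteq> 0" by simp
  show ?thesis unfolding refl_def using aa
    by (simp add: inner_diff_left inner_diff_right inner_commute field_simps)
qed

lemma orth_refl: "orth (refl a)"
  unfolding orth_def using refl_linear refl_inner by blast

lemma refl_refl[simp]: "refl a (refl a x) = x"
proof (cases "a = 0")
  case True then show ?thesis by simp
next
  case False
  then have aa: "a \<bullet> a \<noteq> 0" by simp
  have "refl a x \<bullet> a = - (x \<bullet> a)" unfolding refl_def using aa
    by (simp add: inner_diff_left field_simps)
  then show ?thesis unfolding refl_def[of a "refl a x"] using aa
    by (simp add: refl_def)
qed

lemma refl_comp_refl[simp]: "refl a \<circ> refl a = id"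
  by auto

lemma refl_neg[simp]: "refl (- a) = refl a"
  by (auto simp: refl_def fun_eq_iff)

lemma refl_self: "refl a a = - a"
  by (cases "a = 0") (auto simp: refl_def scaleR_2)

lemma orth_conj:
  assumes "orth u"
  shows "refl (u a) (u x) = u (refl a x)"
proof -
  have l: "linear u" and i: "\<And>x y. u x \<bullet> u y = x \<bullet> y" using assms by (auto simp: orth_def)
  show ?thesis unfolding refl_def i using l by (simp add: linear_diff linear_scale)
qed

lemma orth_conj_fun: "orth u \<Longrightarrow> refl (u a) \<circ> u = u \<circ> refl a"
  by (auto simp: orth_conj)

lemma orth_comp: "orth u \<Longrightarrow> orth v \<Longrightarrow> orth (u \<circ> v)"
  unfolding orth_def by (auto intro: linear_compose)

lemma orth_id: "orth id"
  unfolding orth_def by (simp add: linear_iff)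

lemma refl_word_Nil[simp]: "refl_word [] = id"
  by (simp add: refl_word_def)

lemma refl_word_Cons[simp]: "refl_word (a # xs) = refl a \<circ> refl_word xs"
  by (simp add: refl_word_def)

lemma refl_word_append: "refl_word (xs @ ys) = refl_word xs \<circ> refl_word ys"
  by (induction xs) auto

lemma orth_refl_word: "orth (refl_word xs)"
proof (induction xs)
  case Nil then show ?case by (simp only: refl_word_Nil orth_id)
next
  case (Cons a xs) then show ?case by (simp only: refl_word_Cons) (rule orth_comp[OF orth_refl])
qed

lemma refl_word_rev: "refl_word xs \<circ> refl_word (rev xs) = id"
proof (induction xs)
  case Nil then show ?case by simp
next
  case (Cons a xs)
  have "refl_word (a # xs) \<circ> refl_word (rev (a # xs)) = refl a \<circ> (refl_word xs \<circ> refl_word (rev xs)) \<circ> refl a"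
    by (simp add: refl_word_append comp_assoc)
  also have "\<dots> = id" using Cons by (simp add: fun_eq_iff)
  finally show ?case .
qed

lemma refl_word_rev2: "refl_word (rev xs) \<circ> refl_word xs = id"
  using refl_word_rev[of "rev xs"] by simp

lemma bij_refl_word: "bij (refl_word xs)"
  by (rule o_bij[OF refl_word_rev2 refl_word_rev])

lemma inv_refl_word: "inv (refl_word xs) = refl_word (rev xs)"
  by (rule inv_unique_comp[OF refl_word_rev refl_word_rev2])

lemma refl_word_apply_inv: "refl_word xs (refl_word (rev xs) x) = x"
  using refl_word_rev[of xs] by (simp add: fun_eq_iff)

lemma refl_word_apply_inv2: "refl_word (rev xs) (refl_word xs x) = x"
  using refl_word_rev2[of xs] by (simp add: fun_eq_iff)


definition cone :: "'a::euclidean_space set \<Rightarrow> 'a \<Rightarrow> bool" where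
  "cone D x \<longleftrightarrow> (\<exists>r. x = (\<Sum>d\<in>D. r d *\<^sub>R d) \<and> (\<forall>d\<in>D. 0 \<le> r d))"

lemma indep_unique:
  fixes D :: "'a::euclidean_space set"
  assumes "independent D" "(\<Sum>d\<in>D. r d *\<^sub>R d) = (\<Sum>d\<in>D. s d *\<^sub>R d)" "x \<in> D"
  shows "r x = s x"
proof -
  have "(\<Sum>d\<in>D. (r d - s d) *\<^sub>R d) = 0" using assms(2) by (simp add: scaleR_diff_left sum_subtractf)
  then show ?thesis using assms(1,3) unfolding independent_explicit by fastforce
qed

lemma sum_delta_scale:
  fixes D :: "'a::real_vector set"
  assumes "finite D" "a \<in> D"
  shows "(\<Sum>d\<in>D. (if d = a then k else 0) *\<^sub>R d) = k *\<^sub>R a"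
proof -
  have "(\<Sum>d\<in>D. (if d = a then k else 0) *\<^sub>R d) = (\<Sum>d\<in>D. if d = a then k *\<^sub>R a else 0)"
    by (rule sum.cong) auto
  also have "\<dots> = k *\<^sub>R a" using assms by simp
  finally show ?thesis .
qed

locale RS =
  fixes \<Phi> \<Delta> :: "'a::euclidean_space set"
  assumes rs: "root_system \<Phi>" and rb: "root_basis \<Phi> \<Delta>"
begin

abbreviation "P \<equiv> pos_roots \<Phi> \<Delta>"
abbreviation "N \<equiv> neg_roots \<Phi> \<Delta>"

lemma finPhi: "finite \<Phi>" using rs by (simp add: root_system_def)
lemma zero_notin: "0 \<notin> \<Phi>" using rs by (simp add: root_system_def)
lemma refl_closed: "a \<in> \<Phi> \<Longrightarrow> b \<in> \<Phi> \<Longrightarrow> refl a b \<in> \<Phi>" using rs by (simp add: root_system_def)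
lemma cryst: "a \<in> \<Phi> \<Longrightarrow> b \<in> \<Phi> \<Longrightarrow> 2 * (b \<bullet> a) / (a \<bullet> a) \<in> \<int>" using rs by (simp add: root_system_def)
lemma reduced: "a \<in> \<Phi> \<Longrightarrow> c *\<^sub>R a \<in> \<Phi> \<Longrightarrow> c = 1 \<or> c = -1" using rs by (simp add: root_system_def)
lemma D_sub: "\<Delta> \<subseteq> \<Phi>" using rb by (simp add: root_basis_def)
lemma indep: "independent \<Delta>" using rb by (simp add: root_basis_def)
lemma finD: "finite \<Delta>" using D_sub finPhi finite_subset by blast
lemma neg_closed: "a \<in> \<Phi> \<Longrightarrow> - a \<in> \<Phi>" using refl_closed[of a a] by (simp add: refl_self)
lemma nonzero: "a \<in> \<Phi> \<Longrightarrow> a \<noteq> 0" using zero_notin by blast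

lemma coord_unique: "(\<Sum>d\<in>\<Delta>. r d *\<^sub>R d) = (\<Sum>d\<in>\<Delta>. s d *\<^sub>R d) \<Longrightarrow> x \<in> \<Delta> \<Longrightarrow> r x = s x"
  using indep_unique[OF indep] by blast

lemma P_sub: "P \<subseteq> \<Phi>" by (auto simp: pos_roots_def)

lemma N_iff: "x \<in> N \<longleftrightarrow> - x \<in> P"
  unfolding neg_roots_def by (rule iffI) (auto intro: rev_image_eqI[of "-x"])

lemma N_sub: "N \<subseteq> \<Phi>"
proof
  fix x assume "x \<in> N" then have "- x \<in> \<Phi>" using N_iff P_sub by blast
  from neg_closed[OF this] show "x \<in> \<Phi>" by simp
qed

lemma pos_or_neg: assumes "x \<in> \<Phi>" shows "x \<in> P \<or> x \<in> N"
proof -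
  obtain c :: "'a \<Rightarrow> int" where c: "x = (\<Sum>d\<in>\<Delta>. of_int (c d) *\<^sub>R d)"
    and s: "(\<forall>d\<in>\<Delta>. c d \<ge> 0) \<or> (\<forall>d\<in>\<Delta>. c d \<le> 0)"
    using rb assms unfolding root_basis_def by blast
  show ?thesis using s
  proof
    assume "\<forall>d\<in>\<Delta>. c d \<ge> 0" then have "x \<in> P" using c assms unfolding pos_roots_def by blast
    then show ?thesis by blast
  next
    assume h: "\<forall>d\<in>\<Delta>. c d \<le> 0"
    have "- x = (\<Sum>d\<in>\<Delta>. of_int (- c d) *\<^sub>R d)" using c by (simp add: sum_negf)
    moreover have "\<forall>d\<in>\<Delta>. - c d \<ge> 0" using h by auto
    ultimately have "\<exists>c'::'a\<Rightarrow>int. - x = (\<Sum>d\<in>\<Delta>. of_int (c' d) *\<^sub>R d) \<and> (\<forall>d\<in>\<Delta>. c' d \<ge> 0)"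
      by (intro exI[of _ "\<lambda>d. - c d"] conjI)
    then have "- x \<in> P" using neg_closed[OF assms] unfolding pos_roots_def by simp
    then show ?thesis using N_iff by blast
  qed
qed

lemma pos_coord:
  assumes "x \<in> \<Phi>" "x = (\<Sum>d\<in>\<Delta>. r d *\<^sub>R d)" "d0 \<in> \<Delta>" "r d0 > 0"
  shows "x \<in> P"
proof (rule ccontr)
  assume "x \<notin> P"
  then have "- x \<in> P" using pos_or_neg[OF assms(1)] N_iff by blast
  then obtain c :: "'a \<Rightarrow> int" where c: "- x = (\<Sum>d\<in>\<Delta>. of_int (c d) *\<^sub>R d)" and c0: "\<forall>d\<in>\<Delta>. c d \<ge> 0"
    by (auto simp: pos_roots_def)
  have "x = - (\<Sum>d\<in>\<Delta>. of_int (c d) *\<^sub>R d)" using c by (metis minus_minus)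
  then have "x = (\<Sum>d\<in>\<Delta>. (- of_int (c d)) *\<^sub>R d)" by (simp add: sum_negf)
  then have "(\<Sum>d\<in>\<Delta>. r d *\<^sub>R d) = (\<Sum>d\<in>\<Delta>. (- of_int (c d)) *\<^sub>R d)" using assms(2) by simp
  from coord_unique[OF this assms(3)] have "r d0 = - of_int (c d0)" .
  then show False using c0 assms(3,4) by fastforce
qed

lemma cone_root_pos:
  assumes "x \<in> \<Phi>" "cone \<Delta> x" shows "x \<in> P"
proof -
  obtain r where r: "x = (\<Sum>d\<in>\<Delta>. r d *\<^sub>R d)" "\<forall>d\<in>\<Delta>. 0 \<le> r d" using assms(2) by (auto simp: cone_def)
  show ?thesis
  proof (cases "\<exists>d0\<in>\<Delta>. r d0 > 0")
    case True then show ?thesis using pos_coord[OF assms(1) r(1)] by blast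
  next
    case False
    then have "\<forall>d\<in>\<Delta>. r d = 0" using r(2) by force
    then have "x = 0" using r(1) by simp
    then show ?thesis using nonzero assms(1) by blast
  qed
qed

lemma negcone_root_neg:
  assumes "x \<in> \<Phi>" "cone \<Delta> (- x)" shows "x \<in> N"
  using cone_root_pos[OF neg_closed[OF assms(1)] assms(2)] N_iff by blast

lemma PN_disj: "x \<in> P \<Longrightarrow> x \<notin> N"
proof
  assume p: "x \<in> P" and n: "x \<in> N"
  obtain c :: "'a \<Rightarrow> int" where c: "x = (\<Sum>d\<in>\<Delta>. of_int (c d) *\<^sub>R d)" "\<forall>d\<in>\<Delta>. c d \<ge> 0"
    using p by (auto simp: pos_roots_def)
  have "x \<in> \<Phi>" using p P_sub by blast
  then have "x \<noteq> 0" using nonzero by blast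
  have "\<exists>d0\<in>\<Delta>. c d0 \<noteq> 0"
  proof (rule ccontr)
    assume "\<not> (\<exists>d0\<in>\<Delta>. c d0 \<noteq> 0)"
    then have "\<forall>d\<in>\<Delta>. c d = 0" by blast
    then have "x = 0" using c(1) by simp
    then show False using \<open>x \<noteq> 0\<close> by blast
  qed
  then obtain d0 where d0: "d0 \<in> \<Delta>" "c d0 \<noteq> 0" by blast
  have "- x \<in> P" using n N_iff by blast
  then obtain e :: "'a \<Rightarrow> int" where e: "- x = (\<Sum>d\<in>\<Delta>. of_int (e d) *\<^sub>R d)" "\<forall>d\<in>\<Delta>. e d \<ge> 0"
    by (auto simp: pos_roots_def)
  have "x = - (\<Sum>d\<in>\<Delta>. of_int (e d) *\<^sub>R d)" using e(1) by (metis minus_minus)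
  then have "x = (\<Sum>d\<in>\<Delta>. (- of_int (e d)) *\<^sub>R d)" by (simp add: sum_negf)
  then have "(\<Sum>d\<in>\<Delta>. of_int (c d) *\<^sub>R d) = (\<Sum>d\<in>\<Delta>. (- of_int (e d)) *\<^sub>R d)" using c(1) by simp
  from coord_unique[OF this d0(1)] have "(of_int (c d0)::real) = - of_int (e d0)" .
  then show False using c(2) e(2) d0 by fastforce
qed

lemma pos_cone: assumes "x \<in> P" shows "cone \<Delta> x"
proof -
  obtain c :: "'a \<Rightarrow> int" where c: "x = (\<Sum>d\<in>\<Delta>. of_int (c d) *\<^sub>R d)" "\<forall>d\<in>\<Delta>. c d \<ge> 0"
    using assms by (auto simp: pos_roots_def)
  then show ?thesis unfolding cone_def by (intro exI[of _ "\<lambda>d. of_int (c d)"] conjI) auto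
qed

lemma cone_add: "cone \<Delta> x \<Longrightarrow> cone \<Delta> y \<Longrightarrow> cone \<Delta> (x + y)"
proof -
  assume "cone \<Delta> x" "cone \<Delta> y"
  then obtain r s where "x = (\<Sum>d\<in>\<Delta>. r d *\<^sub>R d)" "\<forall>d\<in>\<Delta>. 0 \<le> r d" "y = (\<Sum>d\<in>\<Delta>. s d *\<^sub>R d)" "\<forall>d\<in>\<Delta>. 0 \<le> s d"
    by (auto simp: cone_def)
  then show ?thesis unfolding cone_def
    by (intro exI[of _ "\<lambda>d. r d + s d"]) (auto simp: scaleR_add_left sum.distrib)
qed

lemma cone_scale: "cone \<Delta> x \<Longrightarrow> 0 \<le> t \<Longrightarrow> cone \<Delta> (t *\<^sub>R x)"
proof -
  assume "cone \<Delta> x" "0 \<le> t"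
  then obtain r where "x = (\<Sum>d\<in>\<Delta>. r d *\<^sub>R d)" "\<forall>d\<in>\<Delta>. 0 \<le> r d"
    by (auto simp: cone_def)
  then show ?thesis using \<open>0 \<le> t\<close> unfolding cone_def
    by (intro exI[of _ "\<lambda>d. t * r d"]) (auto simp: scaleR_sum_right)
qed

lemma simple_pos: assumes "a \<in> \<Delta>" shows "a \<in> P"
proof -
  have "(\<Sum>d\<in>\<Delta>. real_of_int (if d = a then 1 else 0) *\<^sub>R d) = (\<Sum>d\<in>\<Delta>. (if d = a then 1 else 0) *\<^sub>R d)"
    by (rule sum.cong) auto
  also have "\<dots> = a" using sum_delta_scale[OF finD assms, of 1] by simp
  finally have "a = (\<Sum>d\<in>\<Delta>. real_of_int (if d = a then 1 else 0) *\<^sub>R d)" by simp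
  moreover have "\<forall>d\<in>\<Delta>. (if d = a then 1 else 0::int) \<ge> 0" by simp
  ultimately have "\<exists>c'::'a\<Rightarrow>int. a = (\<Sum>d\<in>\<Delta>. of_int (c' d) *\<^sub>R d) \<and> (\<forall>d\<in>\<Delta>. c' d \<ge> 0)"
    by (intro exI[of _ "\<lambda>d. if d = a then 1 else 0"] conjI)
  then show ?thesis using assms D_sub unfolding pos_roots_def by auto
qed

end



context RS begin

lemma refl_coords:
  assumes "x = (\<Sum>d\<in>\<Delta>. r d *\<^sub>R d)" "a \<in> \<Delta>"
  shows "refl a x = (\<Sum>d\<in>\<Delta>. (r d - (if d = a then 2 * (x \<bullet> a) / (a \<bullet> a) else 0)) *\<^sub>R d)"
proof -
  have "(\<Sum>d\<in>\<Delta>. (r d - (if d = a then 2 * (x \<bullet> a) / (a \<bullet> a) else 0)) *\<^sub>R d)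
      = (\<Sum>d\<in>\<Delta>. r d *\<^sub>R d) - (\<Sum>d\<in>\<Delta>. (if d = a then 2 * (x \<bullet> a) / (a \<bullet> a) else 0) *\<^sub>R d)"
    by (simp add: scaleR_diff_left sum_subtractf)
  also have "\<dots> = x - (2 * (x \<bullet> a) / (a \<bullet> a)) *\<^sub>R a" using sum_delta_scale[OF finD assms(2)] assms(1) by simp
  finally show ?thesis by (simp add: refl_def)
qed

lemma int_coeff:
  assumes "a \<in> \<Phi>" "x \<in> \<Phi>"
  obtains k :: int where "2 * (x \<bullet> a) / (a \<bullet> a) = of_int k"
  using cryst[OF assms] by (auto elim: Ints_cases)

lemma other_coord:
  assumes "x \<in> P" "x = (\<Sum>d\<in>\<Delta>. of_int (c d) *\<^sub>R d)" "\<forall>d\<in>\<Delta>. c d \<ge> 0" "a \<in> \<Delta>" "x \<noteq> a"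
  shows "\<exists>d0\<in>\<Delta>. d0 \<noteq> a \<and> c d0 > 0"
proof (rule ccontr)
  assume "\<not> ?thesis"
  then have z: "\<forall>d\<in>\<Delta>. d \<noteq> a \<longrightarrow> c d = 0" using assms(3) by force
  have "x = (\<Sum>d\<in>\<Delta>. (if d = a then of_int (c a) else 0) *\<^sub>R d)"
    unfolding assms(2) by (rule sum.cong) (use z in auto)
  also have "\<dots> = of_int (c a) *\<^sub>R a" using sum_delta_scale[OF finD assms(4)] by simp
  finally have xa: "x = of_int (c a) *\<^sub>R a" .
  have "x \<in> \<Phi>" using assms(1) P_sub by blast
  then have "of_int (c a) = (1::real) \<or> of_int (c a) = (-1::real)" using reduced[of a] xa assms(4) D_sub by auto
  then show False
  proof
    assume "of_int (c a) = (1::real)" then show False using xa assms(5) by simp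
  next
    assume "of_int (c a) = (-1::real)" then have "x = - a" using xa by simp
    then have "x \<in> N" using N_iff simple_pos[OF assms(4)] by simp
    then show False using PN_disj assms(1) by blast
  qed
qed

lemma simple_refl_pos:
  assumes "a \<in> \<Delta>" "x \<in> P" "x \<noteq> a"
  shows "refl a x \<in> P" "refl a x \<noteq> a"
proof -
  obtain c :: "'a \<Rightarrow> int" where c: "x = (\<Sum>d\<in>\<Delta>. of_int (c d) *\<^sub>R d)" "\<forall>d\<in>\<Delta>. c d \<ge> 0"
    using assms(2) by (auto simp: pos_roots_def)
  obtain d0 where d0: "d0 \<in> \<Delta>" "d0 \<noteq> a" "c d0 > 0" using other_coord[OF assms(2) c assms(1,3)] by blast
  have x\<Phi>: "x \<in> \<Phi>" using assms(2) P_sub by blast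
  have a\<Phi>: "a \<in> \<Phi>" using assms(1) D_sub by blast
  show "refl a x \<in> P"
    by (rule pos_coord[OF refl_closed[OF a\<Phi> x\<Phi>] refl_coords[OF c(1) assms(1)] d0(1)]) (use d0 in simp)
  show "refl a x \<noteq> a"
  proof
    assume "refl a x = a"
    then have "refl a (refl a x) = refl a a" by simp
    then have "x = - a" by (simp add: refl_self)
    then have "x \<in> N" using N_iff simple_pos[OF assms(1)] by simp
    then show False using PN_disj assms(2) by blast
  qed
qed

lemma refl_word_closed: "set xs \<subseteq> \<Phi> \<Longrightarrow> x \<in> \<Phi> \<Longrightarrow> refl_word xs x \<in> \<Phi>"
  by (induction xs) (auto intro: refl_closed)

lemma pos_simple_word:
  assumes "b \<in> P"
  shows "\<exists>xs a. set xs \<subseteq> \<Delta> \<and> a \<in> \<Delta> \<and> b = refl_word xs a"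
proof -
  obtain c :: "'a \<Rightarrow> int" where c: "b = (\<Sum>d\<in>\<Delta>. of_int (c d) *\<^sub>R d)" "\<forall>d\<in>\<Delta>. c d \<ge> 0"
    using assms by (auto simp: pos_roots_def)
  have "\<forall>b c. b \<in> P \<longrightarrow> b = (\<Sum>d\<in>\<Delta>. of_int (c d) *\<^sub>R d) \<longrightarrow> (\<forall>d\<in>\<Delta>. c d \<ge> 0) \<longrightarrow> nat (sum c \<Delta>) = n
      \<longrightarrow> (\<exists>xs a. set xs \<subseteq> \<Delta> \<and> a \<in> \<Delta> \<and> b = refl_word xs a)" for n
  proof (induction n rule: less_induct)
    case (less n)
    show ?case
    proof (intro allI impI)
      fix b and c :: "'a \<Rightarrow> int"
      assume bP: "b \<in> P" and bc: "b = (\<Sum>d\<in>\<Delta>. of_int (c d) *\<^sub>R d)" and c0: "\<forall>d\<in>\<Delta>. c d \<ge> 0"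
        and n: "nat (sum c \<Delta>) = n"
      show "\<exists>xs a. set xs \<subseteq> \<Delta> \<and> a \<in> \<Delta> \<and> b = refl_word xs a"
      proof (cases "b \<in> \<Delta>")
        case True then show ?thesis by (intro exI[of _ "[]"] exI[of _ b]) simp
      next
        case False
        have b\<Phi>: "b \<in> \<Phi>" using bP P_sub by blast
        have "b \<bullet> b > 0" using nonzero[OF b\<Phi>] by simp
        also have "b \<bullet> b = (\<Sum>d\<in>\<Delta>. of_int (c d) * (b \<bullet> d))"
          by (subst (2) bc) (simp add: inner_sum_right)
        finally have "0 < (\<Sum>d\<in>\<Delta>. of_int (c d) * (b \<bullet> d))" .
        then obtain a where a: "a \<in> \<Delta>" "0 < of_int (c a) * (b \<bullet> a)"
        proof -
          assume h: "\<And>a. a \<in> \<Delta> \<Longrightarrow> 0 < of_int (c a) * (b \<bullet> a) \<Longrightarrow> thesis"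
          show thesis
          proof (rule ccontr)
            assume "\<not> thesis"
            then have "\<forall>a\<in>\<Delta>. of_int (c a) * (b \<bullet> a) \<le> 0" using h by force
            then have "(\<Sum>d\<in>\<Delta>. of_int (c d) * (b \<bullet> d)) \<le> 0" by (auto intro: sum_nonpos)
            then show False using \<open>0 < (\<Sum>d\<in>\<Delta>. of_int (c d) * (b \<bullet> d))\<close> by simp
          qed
        qed
        have ca: "c a > 0" and ba: "b \<bullet> a > 0" using a(2) c0 a(1)
          by (auto simp: zero_less_mult_iff)
        have a\<Phi>: "a \<in> \<Phi>" using a(1) D_sub by blast
        obtain k :: int where k: "2 * (b \<bullet> a) / (a \<bullet> a) = of_int k" using int_coeff[OF a\<Phi> b\<Phi>] by blast
        have "2 * (b \<bullet> a) / (a \<bullet> a) > 0" using ba nonzero[OF a\<Phi>] by simp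
        then have k1: "k \<ge> 1" using k by simp
        define c' where "c' = (\<lambda>d. c d - (if d = a then k else 0))"
        have rb: "refl a b = (\<Sum>d\<in>\<Delta>. of_int (c' d) *\<^sub>R d)"
          unfolding refl_coords[OF bc a(1)] c'_def k by (rule sum.cong) auto
        have "b \<noteq> a" using False a(1) by blast
        then have rbP: "refl a b \<in> P" using simple_refl_pos(1)[OF a(1) bP] by blast
        obtain e :: "'a \<Rightarrow> int" where e: "refl a b = (\<Sum>d\<in>\<Delta>. of_int (e d) *\<^sub>R d)" "\<forall>d\<in>\<Delta>. e d \<ge> 0"
          using rbP by (auto simp: pos_roots_def)
        have c'0: "\<forall>d\<in>\<Delta>. c' d \<ge> 0"
        proof
          fix d assume d: "d \<in> \<Delta>"
          have "(of_int (c' d)::real) = of_int (e d)" using coord_unique[OF _ d, of "\<lambda>d. of_int (c' d)" "\<lambda>d. of_int (e d)"] rb e(1) by simp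
          then show "c' d \<ge> 0" using e(2) d by simp
        qed
        have "sum c' \<Delta> = sum c \<Delta> - k"
          unfolding c'_def by (simp add: sum_subtractf a(1) finD)
        moreover have "0 \<le> sum c' \<Delta>" using c'0 by (auto intro: sum_nonneg)
        moreover have "\<And>(x::int) y k n. x = y - k \<Longrightarrow> 0 \<le> x \<Longrightarrow> nat y = n \<Longrightarrow> 1 \<le> k \<Longrightarrow> nat x < n" by arith
        ultimately have "nat (sum c' \<Delta>) < n" using n k1 by blast
        then obtain xs a' where xs: "set xs \<subseteq> \<Delta>" "a' \<in> \<Delta>" "refl a b = refl_word xs a'"
          using less.IH rbP rb c'0 by blast
        have "b = refl a (refl a b)" by simp
        also have "\<dots> = refl_word (a # xs) a'" using xs(3) by simp
        finally have "b = refl_word (a # xs) a'" .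
        then show ?thesis using xs a(1) by (intro exI[of _ "a # xs"] exI[of _ a']) auto
      qed
    qed
  qed
  then show ?thesis using assms c by blast
qed

end



lemma orth_linear: "orth u \<Longrightarrow> linear u" by (simp add: orth_def)
lemma orth_inner: "orth u \<Longrightarrow> u x \<bullet> u y = x \<bullet> y" by (simp add: orth_def)
lemma rw_neg: "refl_word xs (- x) = - refl_word xs x"
  using linear_neg[OF orth_linear[OF orth_refl_word]] by blast

context RS begin

lemma pos_refl_simple_word:
  assumes "b \<in> P" shows "\<exists>ys. set ys \<subseteq> \<Delta> \<and> refl b = refl_word ys"
proof -
  obtain xs a where xs: "set xs \<subseteq> \<Delta>" "a \<in> \<Delta>" "b = refl_word xs a" using pos_simple_word[OF assms] by blast
  have c: "refl (refl_word xs a) \<circ> refl_word xs = refl_word xs \<circ> refl a"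
    by (rule orth_conj_fun[OF orth_refl_word])
  have "refl b = refl b \<circ> (refl_word xs \<circ> refl_word (rev xs))" by (simp add: refl_word_rev)
  also have "\<dots> = (refl b \<circ> refl_word xs) \<circ> refl_word (rev xs)" by (simp only: o_assoc)
  also have "\<dots> = (refl_word xs \<circ> refl a) \<circ> refl_word (rev xs)" using c xs(3) by simp
  also have "\<dots> = refl_word (xs @ [a] @ rev xs)" by (simp add: refl_word_append comp_assoc)
  finally show ?thesis using xs by (intro exI[of _ "xs @ [a] @ rev xs"]) auto
qed

lemma refl_simple_word:
  assumes "b \<in> \<Phi>" shows "\<exists>ys. set ys \<subseteq> \<Delta> \<and> refl b = refl_word ys"
proof (cases "b \<in> P")
  case True then show ?thesis by (rule pos_refl_simple_word)
next
  case False
  then have "- b \<in> P" using pos_or_neg[OF assms] N_iff by blast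
  then show ?thesis using pos_refl_simple_word[of "- b"] by simp
qed

lemma word_simple: "set xs \<subseteq> \<Phi> \<Longrightarrow> \<exists>ys. set ys \<subseteq> \<Delta> \<and> refl_word xs = refl_word ys"
proof (induction xs)
  case Nil then show ?case by (intro exI[of _ "[]"]) simp
next
  case (Cons b xs)
  then obtain ys where ys: "set ys \<subseteq> \<Delta>" "refl_word xs = refl_word ys" by auto
  have "b \<in> \<Phi>" using Cons.prems by simp
  then obtain zs where zs: "set zs \<subseteq> \<Delta>" "refl b = refl_word zs" using refl_simple_word by blast
  show ?case using ys zs by (intro exI[of _ "zs @ ys"]) (auto simp: refl_word_append)
qed

lemma weyl_simple: "w \<in> weyl_group \<Phi> \<Longrightarrow> \<exists>ys. set ys \<subseteq> \<Delta> \<and> w = refl_word ys"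
  unfolding weyl_group_def using word_simple by blast

definition ninv :: "('a \<Rightarrow> 'a) \<Rightarrow> nat" where
  "ninv u = card {x \<in> P. u x \<in> N}"

lemma finP: "finite P" using P_sub finPhi finite_subset by blast

lemma lemma16:
  assumes lin: "linear u" and a: "a \<in> \<Delta>" and ua: "u a \<in> P"
  shows "ninv (u \<circ> refl a) = ninv u + 1"
proof -
  define A where "A = {x \<in> P. u x \<in> N}"
  define B where "B = {x \<in> P. (u \<circ> refl a) x \<in> N}"
  have aP: "a \<in> P" using simple_pos[OF a] .
  have "B = insert a (refl a ` A)"
  proof
    show "B \<subseteq> insert a (refl a ` A)"
    proof
      fix x assume x: "x \<in> B"
      show "x \<in> insert a (refl a ` A)"
      proof (cases "x = a")
        case True then show ?thesis by simp
      next
        case False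
        then have "refl a x \<in> P" using simple_refl_pos(1)[OF a] x by (auto simp: B_def)
        then have "refl a x \<in> A" using x by (auto simp: A_def B_def)
        then have "refl a (refl a x) \<in> refl a ` A" by blast
        then show ?thesis by simp
      qed
    qed
  next
    show "insert a (refl a ` A) \<subseteq> B"
    proof
      fix x assume x: "x \<in> insert a (refl a ` A)"
      show "x \<in> B"
      proof (cases "x = a")
        case True
        have "u (refl a a) = - u a" using linear_neg[OF lin] by (simp add: refl_self)
        then show ?thesis using True aP ua N_iff by (simp add: B_def)
      next
        case False
        then obtain y where y: "y \<in> A" "x = refl a y" using x by blast
        have "y \<noteq> a" using y(1) ua PN_disj by (auto simp: A_def)
        then have "refl a y \<in> P" using simple_refl_pos(1)[OF a] y(1) by (auto simp: A_def)
        then show ?thesis using y by (auto simp: A_def B_def)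
      qed
    qed
  qed
  moreover have "a \<notin> refl a ` A"
  proof
    assume "a \<in> refl a ` A"
    then obtain y where y: "y \<in> A" "a = refl a y" by blast
    have "y \<noteq> a" using y(1) ua PN_disj by (auto simp: A_def)
    then have "refl a y \<noteq> a" using simple_refl_pos(2)[OF a] y(1) by (auto simp: A_def)
    then show False using y(2) by simp
  qed
  moreover have "finite A" using finP by (auto simp: A_def)
  moreover have "inj_on (refl a) A" by (rule inj_onI) (metis refl_refl)
  ultimately have "card B = card A + 1" by (simp add: card_image)
  then show ?thesis by (simp add: ninv_def A_def B_def)
qed

lemma exchange:
  assumes "set xs \<subseteq> \<Delta>" "a \<in> \<Delta>" "refl_word xs a \<in> N"
  shows "\<exists>ys. set ys \<subseteq> \<Delta> \<and> length ys < length xs \<and> refl_word xs \<circ> refl a = refl_word ys"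
  using assms
proof (induction xs)
  case Nil
  then show ?case using simple_pos[OF Nil(2)] PN_disj by auto
next
  case (Cons b xs)
  have a\<Phi>: "a \<in> \<Phi>" using Cons(3) D_sub by blast
  have xs\<Phi>: "set xs \<subseteq> \<Phi>" using Cons(2) D_sub by auto
  have "refl_word xs a \<in> \<Phi>" using refl_word_closed[OF xs\<Phi> a\<Phi>] .
  then consider "refl_word xs a \<in> N" | "refl_word xs a \<in> P" using pos_or_neg by blast
  then show ?case
  proof cases
    case 1
    have "set xs \<subseteq> \<Delta>" using Cons.prems(1) by simp
    from Cons.IH[OF this Cons.prems(2) 1] obtain ys where ys: "set ys \<subseteq> \<Delta>" "length ys < length xs" "refl_word xs \<circ> refl a = refl_word ys"
      by blast
    have e: "refl_word (b # xs) \<circ> refl a = refl_word (b # ys)" using fun_cong[OF ys(3)] by (simp add: fun_eq_iff)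
    have "set (b # ys) \<subseteq> \<Delta>" "length (b # ys) < length (b # xs)" using ys Cons.prems(1) by auto
    then show ?thesis using e by blast
  next
    case 2
    have bD: "b \<in> \<Delta>" using Cons(2) by simp
    have "refl b (refl_word xs a) \<in> N" using Cons(4) by simp
    then have eq: "refl_word xs a = b" using simple_refl_pos(1)[OF bD 2] PN_disj by blast
    have c: "refl (refl_word xs a) \<circ> refl_word xs = refl_word xs \<circ> refl a"
      by (rule orth_conj_fun[OF orth_refl_word])
    have c': "\<And>y. refl b (refl_word xs y) = refl_word xs (refl a y)" using fun_cong[OF c] eq by simp
    have e: "refl_word (b # xs) \<circ> refl a = refl_word xs" by (simp add: fun_eq_iff c')
    have "set xs \<subseteq> \<Delta>" "length xs < length (b # xs)" using Cons.prems(1) by auto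
    then show ?thesis using e by blast
  qed
qed

lemma length_eq:
  "set xs \<subseteq> \<Delta> \<Longrightarrow> (\<forall>ys. set ys \<subseteq> \<Delta> \<and> refl_word ys = refl_word xs \<longrightarrow> length xs \<le> length ys)
    \<Longrightarrow> ninv (refl_word xs) = length xs"
proof (induction xs rule: rev_induct)
  case Nil
  have "{x \<in> P. x \<in> N} = {}" using PN_disj by blast
  then have "card {x \<in> P. x \<in> N} = 0" by (metis card.empty)
  then show ?case by (simp add: ninv_def)
next
  case (snoc a xs)
  have aD: "a \<in> \<Delta>" and xsD: "set xs \<subseteq> \<Delta>" using snoc.prems(1) by auto
  have rw: "refl_word (xs @ [a]) = refl_word xs \<circ> refl a" by (simp add: refl_word_append)
  have minxs: "\<forall>ys. set ys \<subseteq> \<Delta> \<and> refl_word ys = refl_word xs \<longrightarrow> length xs \<le> length ys"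
  proof (intro allI impI)
    fix ys assume ys: "set ys \<subseteq> \<Delta> \<and> refl_word ys = refl_word xs"
    then have "set (ys @ [a]) \<subseteq> \<Delta> \<and> refl_word (ys @ [a]) = refl_word (xs @ [a])"
      using aD by (simp add: refl_word_append)
    then have "length (xs @ [a]) \<le> length (ys @ [a])" using snoc.prems(2) by blast
    then show "length xs \<le> length ys" by simp
  qed
  have IH: "ninv (refl_word xs) = length xs" using snoc.IH xsD minxs by blast
  have notN: "refl_word xs a \<notin> N"
  proof
    assume "refl_word xs a \<in> N"
    then obtain ys where ys: "set ys \<subseteq> \<Delta>" "length ys < length xs" "refl_word xs \<circ> refl a = refl_word ys"
      using exchange[OF xsD aD] by blast
    then show False using snoc.prems(2) rw by force
  qed
  have "refl_word xs a \<in> \<Phi>" using refl_word_closed[of xs a] xsD aD D_sub by blast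
  then have "refl_word xs a \<in> P" using notN pos_or_neg by blast
  then have "ninv (refl_word xs \<circ> refl a) = ninv (refl_word xs) + 1"
    by (rule lemma16[OF orth_linear[OF orth_refl_word] aD])
  then have "ninv (refl_word (xs @ [a])) = length xs + 1" unfolding rw IH .
  then show ?case by simp
qed

lemma wlength_ninv:
  assumes "w \<in> weyl_group \<Phi>" shows "wlength \<Delta> w = ninv w"
proof -
  have ex: "\<exists>xs. length xs = length xs \<and> set xs \<subseteq> \<Delta> \<and> w = refl_word xs" using weyl_simple[OF assms] by blast
  let ?Q = "\<lambda>n. \<exists>xs. length xs = n \<and> set xs \<subseteq> \<Delta> \<and> w = refl_word xs"
  obtain n0 where "?Q n0" using ex by blast
  then have "?Q (LEAST n. ?Q n)" by (rule LeastI)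
  then obtain xs where xs: "length xs = wlength \<Delta> w" "set xs \<subseteq> \<Delta>" "w = refl_word xs"
    unfolding wlength_def by blast
  have "\<forall>ys. set ys \<subseteq> \<Delta> \<and> refl_word ys = refl_word xs \<longrightarrow> length xs \<le> length ys"
  proof (intro allI impI)
    fix ys assume "set ys \<subseteq> \<Delta> \<and> refl_word ys = refl_word xs"
    then have "?Q (length ys)" using xs by auto
    then have "(LEAST n. ?Q n) \<le> length ys" by (rule Least_le)
    then show "length xs \<le> length ys" using xs(1) unfolding wlength_def by simp
  qed
  then show ?thesis using length_eq[OF xs(2)] xs by simp
qed

lemma card_inversions:
  "card (inversions \<Phi> \<Delta> (refl_word zs)) = ninv (refl_word zs)"
proof -
  let ?w = "refl_word zs" and ?v = "refl_word (rev zs)"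
  have iv: "inv ?w = ?v" by (rule inv_refl_word)
  have "bij_betw (\<lambda>x. - ?v x) (inversions \<Phi> \<Delta> ?w) {x \<in> P. ?w x \<in> N}"
  proof (rule bij_betw_byWitness[where f' = "\<lambda>y. - ?w y"])
    show "\<forall>a\<in>inversions \<Phi> \<Delta> ?w. - ?w (- ?v a) = a"
      by (simp add: rw_neg refl_word_apply_inv)
    show "\<forall>a\<in>{x \<in> P. ?w x \<in> N}. - ?v (- ?w a) = a"
      by (simp add: rw_neg refl_word_apply_inv2)
    show "(\<lambda>x. - ?v x) ` inversions \<Phi> \<Delta> ?w \<subseteq> {x \<in> P. ?w x \<in> N}"
      using N_iff by (auto simp: inversions_def iv rw_neg refl_word_apply_inv)
    show "(\<lambda>y. - ?w y) ` {x \<in> P. ?w x \<in> N} \<subseteq> inversions \<Phi> \<Delta> ?w"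
      using N_iff by (auto simp: inversions_def iv rw_neg refl_word_apply_inv2)
  qed
  then show ?thesis unfolding ninv_def by (rule bij_betw_same_card)
qed

end



lemma sum_involution_zero:
  fixes g :: "'b \<Rightarrow> real"
  assumes "finite A" "\<And>x. x \<in> A \<Longrightarrow> t x \<in> A" "\<And>x. x \<in> A \<Longrightarrow> t (t x) = x"
    "\<And>x. x \<in> A \<Longrightarrow> g x + g (t x) = 0"
  shows "sum g A = 0"
proof -
  have b: "bij_betw t A A" by (rule bij_betw_byWitness[where f' = t]) (use assms in auto)
  have "sum g A = sum (g \<circ> t) A" using sum.reindex_bij_betw[OF b, of g] by simp
  then have "2 * sum g A = sum g A + sum (\<lambda>x. g (t x)) A" by simp
  also have "\<dots> = sum (\<lambda>x. g x + g (t x)) A" by (simp add: sum.distrib)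
  also have "\<dots> = 0" using assms(4) by simp
  finally show ?thesis by simp
qed

locale MAIN = RS +
  fixes xs :: "'a list" and \<gamma> :: 'a
  assumes xs\<Phi>: "set xs \<subseteq> \<Phi>" and gmax: "\<gamma> \<in> maxinv \<Phi> \<Delta> (refl_word xs)"
begin

abbreviation "w \<equiv> refl_word xs"
abbreviation "v \<equiv> refl_word (rev xs)"
abbreviation "I \<equiv> inversions \<Phi> \<Delta> w"
abbreviation "I' \<equiv> inversions \<Phi> \<Delta> (refl_word (\<gamma> # xs))"

definition f :: "'a \<Rightarrow> real" where "f x = 2 * (x \<bullet> \<gamma>) / (\<gamma> \<bullet> \<gamma>)"

lemma gI: "\<gamma> \<in> I" using gmax by (simp add: maxinv_def)
lemma I_iff: "x \<in> I \<longleftrightarrow> x \<in> P \<and> v x \<in> N" by (simp add: inversions_def inv_refl_word)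
lemma gP: "\<gamma> \<in> P" using gI I_iff by blast
lemma g\<Phi>: "\<gamma> \<in> \<Phi>" using gP P_sub by blast
lemma vgN: "v \<gamma> \<in> N" using gI I_iff by blast
lemma I'_iff: "x \<in> I' \<longleftrightarrow> x \<in> P \<and> v (refl \<gamma> x) \<in> N"
proof -
  have "inv (refl_word (\<gamma> # xs)) = refl_word (rev xs @ [\<gamma>])" by (simp only: inv_refl_word rev.simps)
  then show ?thesis by (simp add: inversions_def refl_word_append)
qed
lemma maxI: "x \<in> I \<Longrightarrow> x \<noteq> \<gamma> \<Longrightarrow> root_le \<Phi> \<Delta> \<gamma> x \<Longrightarrow> False"
  using gmax unfolding maxinv_def by blast
lemma v\<Phi>: "x \<in> \<Phi> \<Longrightarrow> v x \<in> \<Phi>" using refl_word_closed[of "rev xs"] xs\<Phi> by auto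
lemma w\<Phi>: "x \<in> \<Phi> \<Longrightarrow> w x \<in> \<Phi>" using refl_word_closed[of xs] xs\<Phi> by auto
lemma v_add: "v (x + y) = v x + v y" using linear_add[OF orth_linear[OF orth_refl_word]] by blast
lemma v_scale: "v (c *\<^sub>R x) = c *\<^sub>R v x" using linear_scale[OF orth_linear[OF orth_refl_word]] by blast
lemma v_neg: "v (- x) = - v x" by (rule rw_neg)
lemma v_diff: "v (x - y) = v x - v y" using linear_diff[OF orth_linear[OF orth_refl_word]] by blast
lemma gg: "\<gamma> \<bullet> \<gamma> > 0" using nonzero[OF g\<Phi>] by simp

lemma refl_g: "refl \<gamma> x = x - f x *\<^sub>R \<gamma>" by (simp add: refl_def f_def)
lemma f_g: "f \<gamma> = 2" using gg by (simp add: f_def)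
lemma f_neg: "f (- x) = - f x" by (simp add: f_def)
lemma f_refl: "f (refl \<gamma> x) = - f x"
  unfolding refl_g using gg by (simp add: f_def inner_diff_left field_simps)
lemma f_int: "x \<in> \<Phi> \<Longrightarrow> \<exists>k::int. f x = of_int k"
  using cryst[OF g\<Phi>, of x] unfolding f_def by (auto elim: Ints_cases)

lemma root_le2:
  assumes "p1 \<in> P" "p2 \<in> P" "x - y = of_nat n1 *\<^sub>R p1 + of_nat n2 *\<^sub>R p2"
  shows "root_le \<Phi> \<Delta> y x"
proof -
  let ?c = "\<lambda>q. (if q = p1 then n1 else 0) + (if q = p2 then n2 else 0)"
  have "(\<Sum>q\<in>P. of_nat (?c q) *\<^sub>R q) = (\<Sum>q\<in>P. (if q = p1 then of_nat n1 else 0) *\<^sub>R q + (if q = p2 then of_nat n2 else 0) *\<^sub>R q)"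
    by (rule sum.cong) (auto simp: scaleR_add_left)
  also have "\<dots> = of_nat n1 *\<^sub>R p1 + of_nat n2 *\<^sub>R p2"
    by (simp add: sum.distrib sum_delta_scale[OF finP assms(1)] sum_delta_scale[OF finP assms(2)])
  finally show ?thesis unfolding root_le_def using assms(3) by (intro exI[of _ ?c]) simp
qed

lemma Rneg:
  assumes aP: "a \<in> P" and fa: "f a < 0"
  shows "a \<notin> I" "a \<notin> I'" "refl \<gamma> a \<in> P" "refl \<gamma> a \<notin> I"
proof -
  have a\<Phi>: "a \<in> \<Phi>" using aP P_sub by blast
  obtain k :: int where k: "f a = of_int k" using f_int[OF a\<Phi>] by blast
  have k0: "k \<le> -1" using fa k by simp
  define a' where "a' = refl \<gamma> a"
  have a'eq: "a' = a + of_int (- k) *\<^sub>R \<gamma>" unfolding a'_def refl_g k by (simp add: algebra_simps)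
  have a'\<Phi>: "a' \<in> \<Phi>" unfolding a'_def by (rule refl_closed[OF g\<Phi> a\<Phi>])
  have "cone \<Delta> a'" unfolding a'eq using k0
    by (intro cone_add pos_cone aP cone_scale gP) simp
  then show a'P: "refl \<gamma> a \<in> P" using cone_root_pos[OF a'\<Phi>] a'_def by simp
  have a'g: "a' \<noteq> \<gamma>"
  proof
    assume "a' = \<gamma>"
    then have "a = - \<gamma>" unfolding a'_def by (metis refl_refl refl_self)
    then show False using aP gP N_iff PN_disj by auto
  qed
  have "a' - \<gamma> = of_nat 1 *\<^sub>R a + of_nat (nat (- k - 1)) *\<^sub>R \<gamma>"
    using k0 unfolding a'eq by (simp add: algebra_simps of_nat_nat)
  then have le: "root_le \<Phi> \<Delta> \<gamma> a'" by (rule root_le2[OF aP gP])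
  show a'I: "refl \<gamma> a \<notin> I" using maxI[OF _ a'g le] a'_def by blast
  show "a \<notin> I"
  proof
    assume "a \<in> I"
    then have "v a \<in> N" using I_iff by blast
    have "v a' = v a + of_int (- k) *\<^sub>R v \<gamma>" unfolding a'eq by (simp add: v_add v_scale v_diff)
    then have "- v a' = - v a + of_int (- k) *\<^sub>R (- v \<gamma>)" by simp
    moreover have "cone \<Delta> (- v a)" using \<open>v a \<in> N\<close> N_iff pos_cone by blast
    moreover have "cone \<Delta> (- v \<gamma>)" using vgN N_iff pos_cone by blast
    moreover have "(0::real) \<le> of_int (- k)" using k0 by simp
    ultimately have "cone \<Delta> (- v a')" by (simp only: cone_add cone_scale)
    then have "v a' \<in> N" using negcone_root_neg v\<Phi>[OF a'\<Phi>] by blast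
    then have "a' \<in> I" using I_iff a'P a'_def by blast
    then show False using a'I a'_def by blast
  qed
  show "a \<notin> I'" using I'_iff a'I a'P I_iff by blast
qed


lemma refl_g_neg: "refl \<gamma> (- \<gamma>) = \<gamma>"
  using linear_neg[OF refl_linear, of \<gamma> \<gamma>] refl_self[of \<gamma>] by simp

lemma Rpos:
  assumes aP: "a \<in> P" and fa: "f a > 0" and raP: "refl \<gamma> a \<in> P"
  shows "a \<notin> I" "a \<notin> I'"
proof -
  define a'' where "a'' = refl \<gamma> a"
  have fa'': "f a'' < 0" using fa f_refl a''_def by simp
  have a''I: "a'' \<notin> I" using Rneg(1)[OF raP] fa'' a''_def by simp
  show "a \<notin> I'" using I'_iff I_iff raP a''I a''_def by blast
  have a\<Phi>: "a \<in> \<Phi>" using aP P_sub by blast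
  obtain k :: int where k: "f a = of_int k" using f_int[OF a\<Phi>] by blast
  have k1: "k \<ge> 1" using fa k by simp
  have "a = refl \<gamma> a''" unfolding a''_def by simp
  also have "\<dots> = a'' + of_int k *\<^sub>R \<gamma>" unfolding refl_g[of a''] using f_refl[of a] k a''_def by simp
  finally have aeq: "a = a'' + of_int k *\<^sub>R \<gamma>" .
  have "a - \<gamma> = of_nat 1 *\<^sub>R a'' + of_nat (nat (k - 1)) *\<^sub>R \<gamma>"
    using k1 aeq by (simp add: algebra_simps of_nat_nat)
  then have le: "root_le \<Phi> \<Delta> \<gamma> a" by (rule root_le2[OF raP[folded a''_def] gP])
  have ag: "a \<noteq> \<gamma>"
  proof
    assume "a = \<gamma>"
    then have "a'' = - \<gamma>" unfolding a''_def by (simp add: refl_self)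
    then show False using raP a''_def gP N_iff PN_disj by auto
  qed
  show "a \<notin> I" using maxI[OF _ ag le] by blast
qed

lemma Rnz:
  assumes aP: "a \<in> P" and fa: "f a \<noteq> 0" and raP: "refl \<gamma> a \<in> P"
  shows "a \<notin> I \<and> a \<notin> I'"
proof (cases "f a < 0")
  case True then show ?thesis using Rneg[OF aP] by blast
next
  case False then have "f a > 0" using fa by simp
  then show ?thesis using Rpos[OF aP _ raP] by blast
qed

lemma Rz: assumes "f a = 0" shows "a \<in> I' \<longleftrightarrow> a \<in> I"
proof -
  have "refl \<gamma> a = a" using assms refl_g by simp
  then show ?thesis using I_iff I'_iff by simp
qed

lemma strict_cs:
  assumes a: "a \<in> \<Phi>" and b: "b \<in> \<Phi>" and ab: "a \<noteq> b" "a \<noteq> - b"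
  shows "(a \<bullet> b)^2 < (a \<bullet> a) * (b \<bullet> b)"
proof -
  have na: "norm a > 0" using nonzero[OF a] by simp
  have nb: "norm b > 0" using nonzero[OF b] by simp
  have le: "\<bar>a \<bullet> b\<bar> \<le> norm a * norm b" by (rule Cauchy_Schwarz_ineq2)
  have ne: "\<bar>a \<bullet> b\<bar> \<noteq> norm a * norm b"
  proof
    assume "\<bar>a \<bullet> b\<bar> = norm a * norm b"
    then have "norm a *\<^sub>R b = norm b *\<^sub>R a \<or> norm a *\<^sub>R b = - norm b *\<^sub>R a"
      using norm_cauchy_schwarz_abs_eq by blast
    then obtain c where c: "b = c *\<^sub>R a"
    proof
      assume h: "norm a *\<^sub>R b = norm b *\<^sub>R a"
      have "b = inverse (norm a) *\<^sub>R (norm a *\<^sub>R b)" using na by simp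
      also have "\<dots> = (inverse (norm a) * norm b) *\<^sub>R a" unfolding h by simp
      finally show thesis using that by blast
    next
      assume h: "norm a *\<^sub>R b = - norm b *\<^sub>R a"
      have "b = inverse (norm a) *\<^sub>R (norm a *\<^sub>R b)" using na by simp
      also have "\<dots> = (- inverse (norm a) * norm b) *\<^sub>R a" unfolding h by simp
      finally show thesis using that by blast
    qed
    then have "c = 1 \<or> c = -1" using reduced[OF a] b by simp
    then show False using c ab by auto
  qed
  have lt: "\<bar>a \<bullet> b\<bar> < norm a * norm b" using le ne by simp
  have "\<bar>a \<bullet> b\<bar>^2 < (norm a * norm b)^2" by (rule power_strict_mono[OF lt]) auto
  then show ?thesis by (simp add: power_mult_distrib power2_norm_eq_inner)
qed

lemma Sfacts:
  assumes aP: "a \<in> P" and ag: "a \<noteq> \<gamma>" and raP: "refl \<gamma> a \<notin> P"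
  shows "- refl \<gamma> a \<in> P" "f a > 0" "f (- refl \<gamma> a) = f a" "- refl \<gamma> a \<noteq> \<gamma>"
    "refl \<gamma> (- refl \<gamma> a) \<notin> P" "- refl \<gamma> (- refl \<gamma> a) = a"
proof -
  have a\<Phi>: "a \<in> \<Phi>" using aP P_sub by blast
  have ra\<Phi>: "refl \<gamma> a \<in> \<Phi>" by (rule refl_closed[OF g\<Phi> a\<Phi>])
  show "- refl \<gamma> a \<in> P" using pos_or_neg[OF ra\<Phi>] raP N_iff by blast
  show "f a > 0"
  proof (rule ccontr)
    assume "\<not> f a > 0"
    then have "0 \<le> - f a" by simp
    then have "cone \<Delta> (a + (- f a) *\<^sub>R \<gamma>)" by (intro cone_add pos_cone aP cone_scale gP)
    then have "cone \<Delta> (refl \<gamma> a)" unfolding refl_g by simp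
    then show False using cone_root_pos[OF ra\<Phi>] raP by blast
  qed
  show "f (- refl \<gamma> a) = f a" by (simp add: f_neg f_refl)
  show "- refl \<gamma> a \<noteq> \<gamma>"
  proof
    assume "- refl \<gamma> a = \<gamma>"
    then have "refl \<gamma> a = - \<gamma>" by (metis minus_minus)
    then have "refl \<gamma> (refl \<gamma> a) = refl \<gamma> (- \<gamma>)" by simp
    then show False using ag refl_g_neg by simp
  qed
  have "refl \<gamma> (- refl \<gamma> a) = - a" using linear_neg[OF refl_linear, of \<gamma> "refl \<gamma> a"] by simp
  then show "refl \<gamma> (- refl \<gamma> a) \<notin> P" using aP N_iff PN_disj by auto
  show "- refl \<gamma> (- refl \<gamma> a) = a" using linear_neg[OF refl_linear, of \<gamma> "refl \<gamma> a"] by simp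
qed

lemma S1:
  assumes aP: "a \<in> P" and ag: "a \<noteq> \<gamma>" and raP: "refl \<gamma> a \<notin> P"
  shows "a \<in> I' \<longleftrightarrow> - refl \<gamma> a \<notin> I"
proof -
  define b where "b = - refl \<gamma> a"
  have bP: "b \<in> P" using Sfacts(1)[OF assms] b_def by simp
  have vb\<Phi>: "v b \<in> \<Phi>" using v\<Phi> bP P_sub by blast
  have "refl \<gamma> a = - b" using b_def by simp
  then have "a \<in> I' \<longleftrightarrow> - v b \<in> N" using I'_iff aP v_neg by simp
  also have "\<dots> \<longleftrightarrow> v b \<in> P" using N_iff by simp
  also have "\<dots> \<longleftrightarrow> v b \<notin> N" using pos_or_neg[OF vb\<Phi>] PN_disj by blast
  also have "\<dots> \<longleftrightarrow> b \<notin> I" using I_iff bP by blast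
  finally show ?thesis using b_def by simp
qed

lemma S2:
  assumes aP: "a \<in> P" and ag: "a \<noteq> \<gamma>" and raP: "refl \<gamma> a \<notin> P"
  shows "a \<in> I \<or> - refl \<gamma> a \<in> I"
proof (rule ccontr)
  assume h: "\<not> (a \<in> I \<or> - refl \<gamma> a \<in> I)"
  define b where "b = - refl \<gamma> a"
  have bP: "b \<in> P" using Sfacts(1)[OF assms] b_def by simp
  have a\<Phi>: "a \<in> \<Phi>" using aP P_sub by blast
  have "v b \<notin> N" using h I_iff bP b_def by blast
  then have vbP: "v b \<in> P" using pos_or_neg v\<Phi> bP P_sub by blast
  have "v a \<notin> N" using h I_iff aP by blast
  have "b = f a *\<^sub>R \<gamma> - a" unfolding b_def refl_g by simp
  then have "v b = f a *\<^sub>R v \<gamma> - v a" by (simp add: v_diff v_scale)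
  then have "- v a = f a *\<^sub>R (- v \<gamma>) + v b" by (simp add: algebra_simps)
  moreover have "cone \<Delta> (- v \<gamma>)" using vgN N_iff pos_cone by blast
  moreover have "0 \<le> f a" using Sfacts(2)[OF assms] by simp
  moreover have "cone \<Delta> (v b)" using vbP pos_cone by blast
  ultimately have "cone \<Delta> (- v a)" by (simp only: cone_add cone_scale)
  then have "v a \<in> N" using negcone_root_neg v\<Phi>[OF a\<Phi>] by blast
  then show False using \<open>v a \<notin> N\<close> by blast
qed

lemma S3:
  assumes aP: "a \<in> P" and ag: "a \<noteq> \<gamma>" and raP: "refl \<gamma> a \<notin> P"
    and aI: "a \<in> I" and bI: "- refl \<gamma> a \<in> I"
  shows "f a = 1"
proof (rule ccontr)
  assume ne: "f a \<noteq> 1"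
  define b where "b = - refl \<gamma> a"
  have bP: "b \<in> P" using Sfacts(1)[OF aP ag raP] b_def by simp
  have bg: "b \<noteq> \<gamma>" using Sfacts(4)[OF aP ag raP] b_def by simp
  have a\<Phi>: "a \<in> \<Phi>" using aP P_sub by blast
  obtain k :: int where k: "f a = of_int k" using f_int[OF a\<Phi>] by blast
  have k2: "k \<ge> 2" using Sfacts(2)[OF aP ag raP] ne k by simp
  obtain m :: int where m: "2 * (\<gamma> \<bullet> a) / (a \<bullet> a) = of_int m"
    using cryst[OF a\<Phi> g\<Phi>] by (auto elim: Ints_cases)
  have aa: "a \<bullet> a > 0" using nonzero[OF a\<Phi>] by simp
  have ag_pos: "a \<bullet> \<gamma> > 0" using Sfacts(2)[OF aP ag raP] gg by (simp add: f_def zero_less_divide_iff)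
  have "0 < 2 * (\<gamma> \<bullet> a) / (a \<bullet> a)" using aa ag_pos by (simp add: inner_commute)
  then have "(0::real) < of_int m" using m by simp
  then have m1: "m \<ge> 1" by simp
  have agm: "a \<noteq> - \<gamma>" using aP gP N_iff PN_disj by auto
  have cs: "(a \<bullet> \<gamma>)^2 < (a \<bullet> a) * (\<gamma> \<bullet> \<gamma>)" by (rule strict_cs[OF a\<Phi> g\<Phi> ag agm])
  have e1: "of_int k * (\<gamma> \<bullet> \<gamma>) = 2 * (a \<bullet> \<gamma>)" using k gg unfolding f_def by (simp add: field_simps)
  have e2: "of_int m * (a \<bullet> a) = 2 * (a \<bullet> \<gamma>)" using m aa by (simp add: field_simps inner_commute)
  have "of_int k * of_int m * ((a \<bullet> a) * (\<gamma> \<bullet> \<gamma>)) = (of_int k * (\<gamma> \<bullet> \<gamma>)) * (of_int m * (a \<bullet> a))"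
    by (simp add: algebra_simps)
  also have "\<dots> = 4 * (a \<bullet> \<gamma>)^2" unfolding e1 e2 by (simp add: power2_eq_square)
  finally have km: "of_int k * of_int m * ((a \<bullet> a) * (\<gamma> \<bullet> \<gamma>)) = 4 * (a \<bullet> \<gamma>)^2" .
  have "of_int (k * m) * ((a \<bullet> a) * (\<gamma> \<bullet> \<gamma>)) < 4 * ((a \<bullet> a) * (\<gamma> \<bullet> \<gamma>))" using km cs by simp
  then have "of_int (k * m) < (4::real)" using aa gg by simp
  then have "k * m < 4" by linarith
  moreover have "2 * m \<le> k * m" using k2 m1 by (intro mult_right_mono) auto
  ultimately have m_eq: "m = 1" using m1 by linarith
  have "refl a \<gamma> = \<gamma> - a" unfolding refl_def m m_eq by simp
  then have ga\<Phi>: "\<gamma> - a \<in> \<Phi>" using refl_closed[OF a\<Phi> g\<Phi>] by simp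
  have beq: "b = of_int k *\<^sub>R \<gamma> - a" unfolding b_def refl_g k by simp
  show False
  proof (cases "\<gamma> - a \<in> P")
    case True
    have kk: "(of_nat (nat (k - 2)) :: real) = of_int k - 2" using k2 by simp
    have "b - \<gamma> = of_nat (nat (k - 2)) *\<^sub>R \<gamma> + of_nat 1 *\<^sub>R (\<gamma> - a)"
      unfolding kk beq by (simp add: algebra_simps scaleR_2)
    then have "root_le \<Phi> \<Delta> \<gamma> b" by (rule root_le2[OF gP True])
    then show False using maxI[OF _ bg] bI b_def by blast
  next
    case False
    then have "a - \<gamma> \<in> P" using pos_or_neg[OF ga\<Phi>] N_iff by simp
    moreover have "a - \<gamma> = of_nat 1 *\<^sub>R (a - \<gamma>) + of_nat 0 *\<^sub>R \<gamma>" by simp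
    ultimately have "root_le \<Phi> \<Delta> \<gamma> a" using root_le2 gP by blast
    then show False using maxI[OF aI ag] by blast
  qed
qed

end



lemma sum_ind_card:
  assumes "finite A" "S \<subseteq> A"
  shows "(\<Sum>a\<in>A. if a \<in> S then (1::real) else 0) = real (card S)"
proof -
  have "(\<Sum>a\<in>A. if a \<in> S then (1::real) else 0) = (\<Sum>a\<in>A \<inter> {x. x \<in> S}. 1) + (\<Sum>a\<in>A \<inter> - {x. x \<in> S}. 0)"
    by (rule sum.If_cases[OF assms(1)])
  also have "A \<inter> {x. x \<in> S} = S" using assms(2) by blast
  finally show ?thesis by simp
qed

context MAIN begin

definition tau :: "'a \<Rightarrow> 'a" where
  "tau a = (if refl \<gamma> a \<in> P then refl \<gamma> a else - refl \<gamma> a)"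

definition D :: "'a \<Rightarrow> real" where
  "D a = (if a \<in> I' then 1 else 0) - (if a \<in> I then 1 else 0) + (if a \<in> I then f a else - f a)"

lemma tau_props:
  assumes aP: "a \<in> P" and ag: "a \<noteq> \<gamma>"
  shows "tau a \<in> P \<and> tau a \<noteq> \<gamma> \<and> tau (tau a) = a \<and> D a + D (tau a) = 0"
proof (cases "refl \<gamma> a \<in> P")
  case True
  define a' where "a' = refl \<gamma> a"
  have ta: "tau a = a'" using True by (simp add: tau_def a'_def)
  have a'P: "a' \<in> P" using True a'_def by simp
  have a'g: "a' \<noteq> \<gamma>"
  proof
    assume "a' = \<gamma>"
    then have "a = - \<gamma>" unfolding a'_def using refl_refl[of \<gamma> a] refl_self[of \<gamma>] by simp
    then show False using aP gP N_iff PN_disj by auto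
  qed
  have ra': "refl \<gamma> a' = a" by (simp add: a'_def)
  have ta': "tau a' = a" using ra' aP by (simp add: tau_def)
  have "D a + D a' = 0"
  proof (cases "f a = 0")
    case True
    then have "a' = a" unfolding a'_def refl_g by simp
    moreover have "D a = 0" using Rz[OF True] True by (simp add: D_def)
    ultimately show ?thesis by simp
  next
    case False
    have h1: "a \<notin> I \<and> a \<notin> I'" by (rule Rnz[OF aP False True])
    have fa': "f a' = - f a" by (simp add: a'_def f_refl)
    have h2: "a' \<notin> I \<and> a' \<notin> I'" using Rnz[OF a'P _ ] fa' False ra' aP by simp
    show ?thesis using h1 h2 fa' by (simp add: D_def)
  qed
  then show ?thesis using ta ta' a'P a'g by simp
next
  case False
  define b where "b = - refl \<gamma> a"
  have tb: "tau a = b" using False by (simp add: tau_def b_def)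
  have bP: "b \<in> P" and fb: "f b = f a" and bg: "b \<noteq> \<gamma>" and rb: "refl \<gamma> b \<notin> P" and nrb: "- refl \<gamma> b = a"
    using Sfacts[OF aP ag False] b_def by auto
  have ta': "tau b = a" using rb nrb by (simp add: tau_def)
  have s1a: "a \<in> I' \<longleftrightarrow> b \<notin> I" using S1[OF aP ag False] b_def by simp
  have s1b: "b \<in> I' \<longleftrightarrow> a \<notin> I" using S1[OF bP bg rb] nrb by simp
  have s2: "a \<in> I \<or> b \<in> I" using S2[OF aP ag False] b_def by simp
  have s3: "a \<in> I \<Longrightarrow> b \<in> I \<Longrightarrow> f a = 1" using S3[OF aP ag False] b_def by simp
  have "D a + D b = 0"
  proof (cases "a \<in> I")
    case True
    show ?thesis
    proof (cases "b \<in> I")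
      case True
      then show ?thesis using \<open>a \<in> I\<close> s1a s1b s3 fb by (simp add: D_def)
    next
      case False
      then show ?thesis using \<open>a \<in> I\<close> s1a s1b fb by (simp add: D_def)
    qed
  next
    case False
    then have "b \<in> I" using s2 by blast
    then show ?thesis using False s1a s1b fb by (simp add: D_def)
  qed
  then show ?thesis using tb ta' bP bg by simp
qed

lemma D_sum: "(\<Sum>a\<in>P. D a) = 1"
proof -
  have "(\<Sum>a\<in>P - {\<gamma>}. D a) = 0"
    by (rule sum_involution_zero[where t = tau]) (use finP tau_props in auto)
  moreover have "(\<Sum>a\<in>P. D a) = D \<gamma> + (\<Sum>a\<in>P - {\<gamma>}. D a)" by (rule sum.remove[OF finP gP])
  moreover have "\<gamma> \<notin> I'"
  proof
    assume "\<gamma> \<in> I'"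
    then have "v (refl \<gamma> \<gamma>) \<in> N" using I'_iff by blast
    then have "- v \<gamma> \<in> N" by (simp add: refl_self v_neg)
    moreover have "- v \<gamma> \<in> P" using vgN N_iff by blast
    ultimately show False using PN_disj by blast
  qed
  moreover have "D \<gamma> = 1" using \<open>\<gamma> \<notin> I'\<close> gI f_g by (simp add: D_def)
  ultimately show ?thesis by simp
qed

lemma I_sub: "I \<subseteq> P" using I_iff by blast
lemma I'_sub: "I' \<subseteq> P" using I'_iff by blast

lemma e_sum: "(\<Sum>a\<in>P. if a \<in> I then f a else - f a) = (\<Sum>a\<in>I. f a) - (\<Sum>a\<in>P - I. f a)"
proof -
  have "(\<Sum>a\<in>P. if a \<in> I then f a else - f a) = (\<Sum>a\<in>P \<inter> {x. x \<in> I}. f a) + (\<Sum>a\<in>P \<inter> - {x. x \<in> I}. - f a)"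
    by (rule sum.If_cases[OF finP])
  also have "P \<inter> {x. x \<in> I} = I" using I_sub by blast
  also have "P \<inter> - {x. x \<in> I} = P - I" by blast
  finally show ?thesis by (simp add: sum_negf)
qed

lemma count: "real (card I') = real (card I) + 1 - (\<Sum>a\<in>P. if a \<in> I then f a else - f a)"
proof -
  have "(\<Sum>a\<in>P. D a) = (\<Sum>a\<in>P. if a \<in> I' then 1 else 0) - (\<Sum>a\<in>P. if a \<in> I then 1 else 0)
      + (\<Sum>a\<in>P. if a \<in> I then f a else - f a)"
    unfolding D_def by (simp add: sum.distrib sum_subtractf)
  then show ?thesis using D_sum sum_ind_card[OF finP I_sub] sum_ind_card[OF finP I'_sub] by simp
qed

lemma wv: "w (v x) = x" by (rule refl_word_apply_inv)
lemma vw: "v (w x) = x" by (rule refl_word_apply_inv2)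
lemma w_neg: "w (- x) = - w x" by (rule rw_neg)

lemma fw_sum: "(\<Sum>p\<in>P. f (w p)) = (\<Sum>a\<in>P - I. f a) - (\<Sum>a\<in>I. f a)"
proof -
  define A1 where "A1 = {p \<in> P. w p \<in> P}"
  define A2 where "A2 = {p \<in> P. w p \<in> N}"
  have un: "P = A1 \<union> A2"
  proof
    show "P \<subseteq> A1 \<union> A2"
    proof
      fix p assume "p \<in> P"
      then have "w p \<in> \<Phi>" using w\<Phi> P_sub by blast
      then show "p \<in> A1 \<union> A2" using pos_or_neg \<open>p \<in> P\<close> by (auto simp: A1_def A2_def)
    qed
  qed (auto simp: A1_def A2_def)
  have dis: "A1 \<inter> A2 = {}" using PN_disj by (auto simp: A1_def A2_def)
  have fin1: "finite A1" "finite A2" using finP by (auto simp: A1_def A2_def)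
  have b1: "bij_betw w A1 (P - I)"
  proof (rule bij_betw_byWitness[where f' = v])
    show "\<forall>a\<in>A1. v (w a) = a" by (simp add: vw)
    show "\<forall>a\<in>P - I. w (v a) = a" by (simp add: wv)
    show "w ` A1 \<subseteq> P - I" using PN_disj by (auto simp: A1_def I_iff vw)
    show "v ` (P - I) \<subseteq> A1"
    proof
      fix y assume "y \<in> v ` (P - I)"
      then obtain x where x: "x \<in> P" "x \<notin> I" "y = v x" by blast
      have "v x \<notin> N" using x I_iff by blast
      moreover have "v x \<in> \<Phi>" using v\<Phi> x P_sub by blast
      ultimately have "v x \<in> P" using pos_or_neg by blast
      then show "y \<in> A1" using x by (simp add: A1_def wv)
    qed
  qed
  have b2: "bij_betw (\<lambda>p. - w p) A2 I"
  proof (rule bij_betw_byWitness[where f' = "\<lambda>x. - v x"])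
    show "\<forall>a\<in>A2. - v (- w a) = a" by (simp add: v_neg vw)
    show "\<forall>a\<in>I. - w (- v a) = a" by (simp add: w_neg wv)
    show "(\<lambda>p. - w p) ` A2 \<subseteq> I" using N_iff by (auto simp: A2_def I_iff v_neg vw)
    show "(\<lambda>x. - v x) ` I \<subseteq> A2" using N_iff by (auto simp: A2_def I_iff w_neg wv)
  qed
  have s1: "(\<Sum>p\<in>A1. f (w p)) = (\<Sum>a\<in>P - I. f a)" by (rule sum.reindex_bij_betw[OF b1])
  have "(\<Sum>p\<in>A2. f (- w p)) = (\<Sum>a\<in>I. f a)" by (rule sum.reindex_bij_betw[OF b2])
  then have s2: "(\<Sum>p\<in>A2. f (w p)) = - (\<Sum>a\<in>I. f a)" by (simp add: f_neg sum_negf)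
  have "(\<Sum>p\<in>P. f (w p)) = (\<Sum>p\<in>A1. f (w p)) + (\<Sum>p\<in>A2. f (w p))"
    unfolding un by (rule sum.union_disjoint[OF fin1 dis])
  then show ?thesis using s1 s2 by simp
qed

lemma coroot_sum: "coroot (- v \<gamma>) \<bullet> two_rho \<Phi> \<Delta> = (\<Sum>a\<in>P. if a \<in> I then f a else - f a)"
proof -
  have bb: "(- v \<gamma>) \<bullet> (- v \<gamma>) = \<gamma> \<bullet> \<gamma>" using orth_inner[OF orth_refl_word, of "rev xs" \<gamma> \<gamma>] by simp
  have tm: "coroot (- v \<gamma>) \<bullet> p = - f (w p)" for p
  proof -
    have "v \<gamma> \<bullet> p = w (v \<gamma>) \<bullet> w p" using orth_inner[OF orth_refl_word, of xs "v \<gamma>" p] by simp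
    also have "\<dots> = \<gamma> \<bullet> w p" by (simp add: wv)
    finally have "v \<gamma> \<bullet> p = \<gamma> \<bullet> w p" .
    then show ?thesis unfolding coroot_def bb f_def by (simp add: inner_commute)
  qed
  have "coroot (- v \<gamma>) \<bullet> two_rho \<Phi> \<Delta> = (\<Sum>p\<in>P. coroot (- v \<gamma>) \<bullet> p)"
    unfolding two_rho_def by (rule inner_sum_right)
  also have "\<dots> = - (\<Sum>p\<in>P. f (w p))" by (simp add: tm sum_negf)
  also have "\<dots> = (\<Sum>a\<in>I. f a) - (\<Sum>a\<in>P - I. f a)" using fw_sum by simp
  also have "\<dots> = (\<Sum>a\<in>P. if a \<in> I then f a else - f a)" using e_sum by simp
  finally show ?thesis .
qed

end

theorem lemma3p11:
  fixes \<Phi> \<Delta> :: "'a::euclidean_space set" and w :: "'a \<Rightarrow> 'a" and \<gamma> \<beta> :: 'a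
  assumes "root_system \<Phi>" and "root_basis \<Phi> \<Delta>"
    and "w \<in> weyl_group \<Phi>" and "\<gamma> \<in> maxinv \<Phi> \<Delta> w"
    and "\<beta> = - inv w \<gamma>"
  shows "\<beta> \<in> pos_roots \<Phi> \<Delta> \<and> refl \<gamma> \<circ> w = w \<circ> refl \<beta> \<and>
         real (wlength \<Delta> (w \<circ> refl \<beta>)) = real (wlength \<Delta> w) + 1 - coroot \<beta> \<bullet> two_rho \<Phi> \<Delta>"
proof -
  obtain xs where xs: "set xs \<subseteq> \<Phi>" "w = refl_word xs" using assms(3) unfolding weyl_group_def by blast
  interpret M: MAIN \<Phi> \<Delta> xs \<gamma>
    by (rule MAIN.intro[OF RS.intro[OF assms(1,2)] MAIN_axioms.intro[OF xs(1)]]) (use assms(4) xs(2) in simp)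
  have beta: "\<beta> = - refl_word (rev xs) \<gamma>" using assms(5) xs(2) by (simp add: inv_refl_word)
  have bP: "\<beta> \<in> pos_roots \<Phi> \<Delta>" using beta M.vgN M.N_iff by simp
  have wb: "w \<beta> = - \<gamma>" using beta xs(2) by (simp add: M.w_neg M.wv)
  have c: "refl (w \<beta>) \<circ> w = w \<circ> refl \<beta>" unfolding xs(2) by (rule orth_conj_fun[OF orth_refl_word])
  have eq2: "refl \<gamma> \<circ> w = w \<circ> refl \<beta>" using c wb by simp
  have g\<Phi>: "\<gamma> \<in> \<Phi>" by (rule M.g\<Phi>)
  have W1: "refl_word (\<gamma> # xs) \<in> weyl_group \<Phi>" unfolding weyl_group_def mem_Collect_eq
    by (rule exI[of _ "\<gamma> # xs"]) (use xs(1) g\<Phi> in simp)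
  have W0: "refl_word xs \<in> weyl_group \<Phi>" unfolding weyl_group_def mem_Collect_eq
    by (rule exI[of _ xs]) (use xs(1) in simp)
  have "w \<circ> refl \<beta> = refl_word (\<gamma> # xs)" using eq2 xs(2) by simp
  then have l1: "wlength \<Delta> (w \<circ> refl \<beta>) = card (inversions \<Phi> \<Delta> (refl_word (\<gamma> # xs)))"
    using M.wlength_ninv[OF W1] M.card_inversions[of "\<gamma> # xs"] by simp
  have l0: "wlength \<Delta> w = card (inversions \<Phi> \<Delta> (refl_word xs))"
    using M.wlength_ninv[OF W0] M.card_inversions[of xs] xs(2) by simp
  have "coroot \<beta> \<bullet> two_rho \<Phi> \<Delta> = (\<Sum>a\<in>pos_roots \<Phi> \<Delta>. if a \<in> inversions \<Phi> \<Delta> (refl_word xs) then M.f a else - M.f a)"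
    using beta M.coroot_sum by simp
  then have "real (wlength \<Delta> (w \<circ> refl \<beta>)) = real (wlength \<Delta> w) + 1 - coroot \<beta> \<bullet> two_rho \<Phi> \<Delta>"
    using M.count l0 l1 by simp
  then show ?thesis using bP eq2 by blast
qed


end
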